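(* Let $\langle A, \leq, \otimes, \mathbf{1}\rangle$ be a finitely distributive semi-lattice monoid. Then $C'(A) = C(A)$, where $C'(A) = \{c \in A \mid \exists a,b \in A.\ a < b \wedge a \otimes c = b \otimes c\}$ and $C(A) = \{c \in A \mid \exists a,b\in A.\ a \neq b \wedge a \otimes c = b \otimes c\}$.
   Context: A semi-lattice monoid (SLM) is a structure $\langle A, \leq, \otimes, \mathbf{1}\rangle$ where $\langle A, \otimes, \mathbf{1}\rangle$ is a commutative monoid and $\langle A,\leq\rangle$ is a partial order in which every finite subset $X$ (including $\emptyset$) has a least upper bound $\bigvee X$. It is finitely distributive if $a \otimes \bigvee X = \bigvee\{a \otimes x \mid x \in X\}$ for every finite $X \subseteq A$ and every $a \in A$. $a<b$ means $a\leq b$ and $a\neq b$. *)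

theory Defs
  imports Main
begin

definition is_lub :: "('a \<Rightarrow> 'a \<Rightarrow> bool) \<Rightarrow> 'a set \<Rightarrow> 'a \<Rightarrow> bool" where
  "is_lub le X s \<longleftrightarrow> (\<forall>x\<in>X. le x s) \<and> (\<forall>u. (\<forall>x\<in>X. le x u) \<longrightarrow> le s u)"

definition lub :: "('a \<Rightarrow> 'a \<Rightarrow> bool) \<Rightarrow> 'a set \<Rightarrow> 'a" where
  "lub le X = (THE s. is_lub le X s)"

definition slm :: "('a \<Rightarrow> 'a \<Rightarrow> bool) \<Rightarrow> ('a \<Rightarrow> 'a \<Rightarrow> 'a) \<Rightarrow> 'a \<Rightarrow> bool" where
  "slm le mult one \<longleftrightarrow>
     (\<forall>a b c. mult (mult a b) c = mult a (mult b c)) \<and>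
     (\<forall>a b. mult a b = mult b a) \<and>
     (\<forall>a. mult one a = a) \<and>
     (\<forall>a. le a a) \<and>
     (\<forall>a b c. le a b \<longrightarrow> le b c \<longrightarrow> le a c) \<and>
     (\<forall>a b. le a b \<longrightarrow> le b a \<longrightarrow> a = b) \<and>
     (\<forall>X. finite X \<longrightarrow> (\<exists>s. is_lub le X s))"

definition finitely_distributive_slm :: "('a \<Rightarrow> 'a \<Rightarrow> bool) \<Rightarrow> ('a \<Rightarrow> 'a \<Rightarrow> 'a) \<Rightarrow> 'a \<Rightarrow> bool" where
  "finitely_distributive_slm le mult one \<longleftrightarrow>
     slm le mult one \<and>
     (\<forall>a X. finite X \<longrightarrow> mult a (lub le X) = lub le ((\<lambda>x. mult a x) ` X))"

definition C' :: "('a \<Rightarrow> 'a \<Rightarrow> bool) \<Rightarrow> ('a \<Rightarrow> 'a \<Rightarrow> 'a) \<Rightarrow> 'a set" where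
  "C' le mult = {c. \<exists>a b. le a b \<and> a \<noteq> b \<and> mult a c = mult b c}"

definition C :: "('a \<Rightarrow> 'a \<Rightarrow> 'a) \<Rightarrow> 'a set" where
  "C mult = {c. \<exists>a b. a \<noteq> b \<and> mult a c = mult b c}"

end

theory Submission
  imports Defs
begin

lemma lub_unique:
  assumes "slm le mult one" "is_lub le X s"
  shows "lub le X = s"
proof -
  have anti: "\<forall>a b. le a b \<longrightarrow> le b a \<longrightarrow> a = b"
    using assms(1) unfolding slm_def by (elim conjE)
  have "\<And>t. is_lub le X t \<Longrightarrow> t = s"
  proof -
    fix t assume t: "is_lub le X t"
    have "le t s" using t assms(2) unfolding is_lub_def by simp
    moreover have "le s t" using t assms(2) unfolding is_lub_def by simp
    ultimately show "t = s" using anti by simp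
  qed
  then show ?thesis unfolding lub_def using assms(2) by (rule the_equality[rotated])
qed

theorem lemma7:
  fixes le :: "'a \<Rightarrow> 'a \<Rightarrow> bool" and mult :: "'a \<Rightarrow> 'a \<Rightarrow> 'a" and one :: 'a
  assumes "finitely_distributive_slm le mult one"
  shows "C' le mult = C mult"
proof
  show "C' le mult \<subseteq> C mult" unfolding C'_def C_def by blast
next
  have S: "slm le mult one" and D: "\<And>a X. finite X \<Longrightarrow> mult a (lub le X) = lub le ((\<lambda>x. mult a x) ` X)"
    using assms unfolding finitely_distributive_slm_def by auto
  have refl: "\<And>a. le a a" and comm: "\<And>a b. mult a b = mult b a"
    and anti: "\<And>a b. le a b \<Longrightarrow> le b a \<Longrightarrow> a = b"
    using S unfolding slm_def by (elim conjE; simp)+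
  show "C mult \<subseteq> C' le mult"
  proof
    fix c assume "c \<in> C mult"
    then obtain a b where ab: "a \<noteq> b" "mult a c = mult b c" unfolding C_def by blast
    obtain s where s: "is_lub le {a,b} s" using S unfolding slm_def by (meson finite.emptyI finite.insertI)
    have ls: "lub le {a,b} = s" using lub_unique[OF S s] .
    have "is_lub le {mult c a} (mult c a)" unfolding is_lub_def using refl by auto
    hence l1: "lub le {mult c a} = mult c a" using lub_unique[OF S] by blast
    have "mult c s = lub le ((\<lambda>x. mult c x) ` {a,b})" using D[of "{a,b}" c] ls by simp
    also have "(\<lambda>x. mult c x) ` {a,b} = {mult c a}" using ab(2) comm[of c a] comm[of c b] by simp
    finally have sc: "mult s c = mult a c" using l1 comm[of c s] comm[of c a] by simp
    have las: "le a s" "le b s" using s unfolding is_lub_def by auto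
    show "c \<in> C' le mult"
    proof (cases "a = s")
      case True
      then have "b \<noteq> s" using ab by auto
      then show ?thesis unfolding C'_def
        by (intro CollectI exI[of _ b] exI[of _ s]) (use las sc ab in simp)
    next
      case False
      then show ?thesis unfolding C'_def
        by (intro CollectI exI[of _ a] exI[of _ s]) (use las sc in simp)
    qed
  qed
qed

end
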